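(* Let $r$ be a prime power, $q=r^2$, and let $0\le k\le n\le q$ be integers. Then there exists a Hermitian self-orthogonal matrix-product code over $\mathbb{F}_q$ with parameters $[2n,n,d]_q$ where $d\ge\min\{2(n-k+1),k+1\}$.
   Context: For $a\in\mathbb{F}_q$, $\overline{a}:=a^r$. The Hermitian inner product on $\mathbb{F}_q^n$ is $\langle u,v\rangle_H=\sum_i u_i\overline{v_i}$; a linear code $C$ is Hermitian self-orthogonal if $C\subseteq C^{\perp_H}$. A code with parameters $[n,k,d]_q$ has length $n$, dimension $k$, minimum Hamming weight $d$. If $C_1,\dots,C_s$ are linear codes of length $m$ with generator matrices $G_i$ and $A=[a_{ij}]\in M_{s,l}(\mathbb{F}_q)$, the matrix-product code $[C_1,\dots,C_s]\cdot A$ is the linear code of length $ml$ generated by the block matrix whose $(i,j)$ block is $a_{ij}G_i$. *)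

theory Defs
  imports Complex_Main "HOL-Library.Function_Algebras" "HOL-Computational_Algebra.Primes"
begin

text \<open>Vectors of length N over a field are functions nat => 'a vanishing outside {..<N}.\<close>

definition vecs :: "nat \<Rightarrow> (nat \<Rightarrow> 'a::zero) set" where
  "vecs N = {v. \<forall>i\<ge>N. v i = 0}"

definition vscale :: "'a::field \<Rightarrow> (nat \<Rightarrow> 'a) \<Rightarrow> (nat \<Rightarrow> 'a)" where
  "vscale c v = (\<lambda>i. c * v i)"

definition linear_code :: "nat \<Rightarrow> (nat \<Rightarrow> 'a::field) set \<Rightarrow> bool" where
  "linear_code N C \<longleftrightarrow> C \<subseteq> vecs N \<and> module.subspace vscale C"

definition code_dim :: "(nat \<Rightarrow> 'a::field) set \<Rightarrow> nat" where
  "code_dim C = vector_space.dim vscale C"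

definition hweight :: "nat \<Rightarrow> (nat \<Rightarrow> 'a::zero) \<Rightarrow> nat" where
  "hweight N v = card {i. i < N \<and> v i \<noteq> 0}"

text \<open>Hermitian inner product, conjugation a |-> a^r.\<close>
definition herm_inner :: "nat \<Rightarrow> nat \<Rightarrow> (nat \<Rightarrow> 'a::field) \<Rightarrow> (nat \<Rightarrow> 'a) \<Rightarrow> 'a" where
  "herm_inner r N u v = (\<Sum>i<N. u i * (v i) ^ r)"

definition herm_self_orth :: "nat \<Rightarrow> nat \<Rightarrow> (nat \<Rightarrow> 'a::field) set \<Rightarrow> bool" where
  "herm_self_orth r N C \<longleftrightarrow> (\<forall>u\<in>C. \<forall>v\<in>C. herm_inner r N u v = 0)"

text \<open>Matrix-product code [C_0,...,C_{s-1}] . A, A an s x l matrix, codes of length m.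
  Generated by block matrix with (i,j) block a_ij G_i; its row space is the set of
  concatenations (sum_i a_i0 c_i | ... | sum_i a_i(l-1) c_i), c_i in C_i.
  Position p of the length m*l word lies in block p div m at offset p mod m.\<close>
definition mp_code :: "nat \<Rightarrow> nat \<Rightarrow> nat \<Rightarrow> (nat \<Rightarrow> (nat \<Rightarrow> 'a::field) set)
    \<Rightarrow> (nat \<Rightarrow> nat \<Rightarrow> 'a) \<Rightarrow> (nat \<Rightarrow> 'a) set" where
  "mp_code m s l C A =
     {w. \<exists>c. (\<forall>i<s. c i \<in> C i) \<and>
          w = (\<lambda>p. if p < m * l then (\<Sum>i<s. A i (p div m) * c i (p mod m)) else 0)}"

end

theory Submission
  imports Defs "HOL-Number_Theory.Residues" "HOL-Computational_Algebra.Polynomial"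
begin

lemma sum_fun_apply': "(sum f A) x = sum (\<lambda>a. f a x) A"
  by (induct A rule: infinite_finite_induct) auto

lemma ff_power_card:
  fixes x :: "'a :: {finite,field}"
  shows "x ^ card (UNIV :: 'a set) = x"
proof (cases "x = 0")
  case False
  have "x * (\<Prod>y\<in>UNIV-{0}. x * y) = x * x ^ (card (UNIV :: 'a set) - 1) * \<Prod>(UNIV-{0})"
    by (simp add: prod.distrib mult_ac)
  also have "x * x ^ (card (UNIV :: 'a set) - 1) = x ^ Suc (card (UNIV :: 'a set) - 1)"
    by (subst power_Suc) auto
  also have "Suc (card (UNIV :: 'a set) - 1) = card (UNIV :: 'a set)"
    using finite_UNIV_card_ge_0[where ?'a = 'a] by simp
  also have "(\<Prod>y\<in>UNIV-{0}. x * y) = (\<Prod>y\<in>UNIV-{0}. y)"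
    by (rule prod.reindex_bij_witness[of _ "\<lambda>y. y / x" "\<lambda>y. x * y"]) (use False in auto)
  finally show ?thesis
    by simp
qed (use finite_UNIV_card_ge_0[where ?'a = 'a] in auto)

lemma char_eq:
  assumes "prime p" "e > 0" "card (UNIV :: 'a::{finite,field} set) = (p ^ e) ^ 2"
  shows "CHAR('a) = p"
proof -
  have pc: "prime CHAR('a)"
    using prime_CHAR_semidom[where ?'a='a] finite_imp_CHAR_pos[where ?'a='a] by auto
  have "CHAR('a) dvd p ^ (e * 2)" using CHAR_dvd_CARD[where ?'a='a] assms(3) by (simp add: power_mult)
  hence "CHAR('a) dvd p" using pc prime_dvd_power by blast
  thus ?thesis using pc assms(1) by (simp add: primes_dvd_imp_eq)
qed


lemma card_roots_pow:
  fixes c :: "'a::field"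
  assumes "m \<ge> 1"
  shows "card {z::'a. z ^ m = c} \<le> m"
proof -
  define P where "P = monom (1::'a) m - [:c:]"
  have ev: "poly P z = z ^ m - c" for z by (simp add: P_def poly_monom)
  have cm: "coeff P m = 1" using assms by (cases m) (simp_all add: P_def coeff_monom coeff_pCons)
  hence nz: "P \<noteq> 0" by auto
  have "degree P \<le> m" unfolding P_def
    by (metis degree_diff_le degree_monom_le degree_pCons_0 le0 le_trans)
  moreover have "{z. z ^ m = c} = {z. poly P z = 0}" by (auto simp: ev)
  ultimately show ?thesis using card_poly_roots_bound[OF nz] by simp
qed

lemma norm_minus_one:
  assumes "prime p" "e > 0" "r = p ^ e" "card (UNIV :: 'a::{finite,field} set) = r ^ 2"
  shows "\<exists>\<alpha> \<beta> :: 'a. \<alpha> \<noteq> \<beta> \<and> \<alpha> ^ (r+1) = -1 \<and> \<beta> ^ (r+1) = -1"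
proof -
  have r2: "r \<ge> 2" using assms prime_ge_2_nat
    by (metis le_trans power_increasing_iff self_le_power one_le_numeral  nat_less_le not_less zero_less_iff_neq_zero power_one_right )
  define U where "U = (UNIV - {0} :: 'a set)"
  define S where "S = {y::'a. y ^ (r - 1) = 1}"
  define N where "N = (\<lambda>x::'a. x ^ (r + 1))"
  define F where "F = (\<lambda>s. {x \<in> U. N x = s})"
  have q1: "x ^ (r^2 - 1) = 1" if "x \<noteq> 0" for x :: 'a
  proof -
    have "x * x ^ (r^2 - 1) = x ^ (r^2)" using r2
      by (metis Suc_diff_1 power_Suc zero_less_power zero_less_numeral le_trans  numeral_le_iff one_le_numeral less_le_trans zero_less_one  not_less)
    also have "\<dots> = x" using ff_power_card[of x] assms(4) by simp
    finally show ?thesis using that by simp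
  qed
  have NS: "N ` U \<subseteq> S"
  proof
    fix y assume "y \<in> N ` U"
    then obtain x where x: "x \<noteq> 0" "y = N x" by (auto simp: U_def)
    have "(r + 1) * (r - 1) = r^2 - 1" using r2
      by (simp add: power2_eq_square algebra_simps diff_mult_distrib2)
    have "y ^ (r - 1) = x ^ ((r + 1) * (r - 1))" unfolding x N_def by (rule power_mult[symmetric])
    hence "y ^ (r - 1) = x ^ (r^2 - 1)" using \<open>(r + 1) * (r - 1) = r^2 - 1\<close> by simp
    thus "y \<in> S" using q1[OF x(1)] by (simp add: S_def)
  qed
  have cS: "card S \<le> r - 1" unfolding S_def by (rule card_roots_pow) (use r2 in auto)
  have m1S: "-1 \<in> S"
  proof (cases "p = 2")
    case True
    hence "CHAR('a) = 2" using char_eq[of p e] assms by simp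
    hence h: "-(1::'a) = 1" by (rule uminus_CHAR_2)
    show ?thesis unfolding S_def by (subst h) simp
  next
    case False
    have "odd p" using prime_odd_nat[of p] prime_ge_2_nat[OF assms(1)] False assms(1) by simp
    hence "odd r" by (simp add: assms(3))
    hence "even (r - 1)" using r2 by simp
    thus ?thesis by (simp add: S_def)
  qed
  have fib: "card (F s) \<le> r + 1" for s
  proof (cases "F s = {}")
    case False
    then obtain x0 where x0: "x0 \<in> F s" by auto
    have "inj_on (\<lambda>x. x / x0) (F s)" using x0 by (auto simp: inj_on_def F_def U_def)
    moreover have "(\<lambda>x. x / x0) ` F s \<subseteq> {z. z ^ (r+1) = 1}"
      using x0 by (auto simp: F_def U_def N_def power_divide)
    ultimately have "card (F s) \<le> card {z::'a. z ^ (r+1) = 1}"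
      by (intro card_inj_on_le) auto
    also have "\<dots> \<le> r + 1" by (rule card_roots_pow) simp
    finally show ?thesis .
  qed simp
  have "card U = (\<Sum>s\<in>S. card (F s))"
    using sum.group[of U S N "\<lambda>_. 1::nat"] NS by (simp add: F_def)
  also have "\<dots> = card (F (-1)) + (\<Sum>s\<in>S - {-1}. card (F s))"
    using m1S by (simp add: sum.remove)
  also have "(\<Sum>s\<in>S - {-1}. card (F s)) \<le> (\<Sum>s\<in>S - {-1}. r + 1)"
    by (rule sum_mono) (rule fib)
  also have "\<dots> = (card S - 1) * (r + 1)" using m1S by simp
  also have "\<dots> \<le> (r - 2) * (r + 1)" using cS by (intro mult_right_mono) auto
  finally have A: "card U \<le> card (F (-1)) + (r - 2) * (r + 1)" by simp
  have "card U = r^2 - 1" using assms(4) by (simp add: U_def card_Diff_subset)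
  also have "r^2 - 1 = (r - 2) * (r + 1) + (r + 1)"
  proof -
    obtain t where t: "r = t + 2" using r2 le_Suc_ex by (metis add.commute)
    show ?thesis unfolding t by (simp add: power2_eq_square algebra_simps)
  qed
  finally have "card (F (-1)) \<ge> r + 1" using A by linarith
  hence "card (F (-1)) \<ge> 2" using r2 by linarith
  then obtain B where "B \<subseteq> F (-1)" "card B = 2"
    by (meson obtain_subset_with_card_n)
  then obtain a b where "a \<in> F (-1)" "b \<in> F (-1)" "a \<noteq> b"
    by (auto simp: card_2_iff)
  thus ?thesis by (auto simp: F_def N_def)
qed


lemma poly_zero_many_roots:
  fixes P :: "'a::field poly" and x :: "nat \<Rightarrow> 'a"
  assumes "inj_on x {..<n}" "\<And>l. l < n \<Longrightarrow> poly P (x l) = 0" "degree P < n"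
  shows "P = 0"
proof (rule ccontr)
  assume nz: "P \<noteq> 0"
  have "x ` {..<n} \<subseteq> {z. poly P z = 0}" using assms(2) by auto
  moreover have "finite {z. poly P z = 0}" using nz poly_roots_finite by blast
  ultimately have "card (x ` {..<n}) \<le> card {z. poly P z = 0}" by (rule card_mono[rotated])
  hence "n \<le> card {z. poly P z = 0}" using card_image[OF assms(1)] by simp
  also have "\<dots> \<le> degree P" by (rule card_poly_roots_bound[OF nz])
  finally show False using assms(3) by simp
qed

lemma lagrange_power_sum:
  fixes x :: "nat \<Rightarrow> 'a::field"
  assumes inj: "inj_on x {..<n}" and t: "t + 2 \<le> n"
  shows "(\<Sum>i<n. inverse (\<Prod>j\<in>{..<n}-{i}. (x i - x j)) * x i ^ t) = 0"
proof -
  define v where "v i = inverse (\<Prod>j\<in>{..<n}-{i}. (x i - x j))" for i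
  define L where "L i = (\<Prod>j\<in>{..<n}-{i}. [:- x j, 1:])" for i
  define P where "P = (\<Sum>i<n. smult (v i * x i ^ t) (L i))"
  have pL: "poly (L i) z = (\<Prod>j\<in>{..<n}-{i}. (z - x j))" for i z
    by (simp add: L_def poly_prod)
  have prodnz: "(\<Prod>j\<in>{..<n}-{i}. (x i - x j)) \<noteq> 0" if "i < n" for i
    using inj that by (auto simp: inj_on_def)
  have degL: "degree (L i) = n - 1" if "i < n" for i
  proof -
    have "degree (L i) = (\<Sum>j\<in>{..<n}-{i}. degree [:- x j, 1:])"
      unfolding L_def by (rule degree_prod_eq_sum_degree) auto
    also have "\<dots> = card ({..<n}-{i})" by simp
    also have "\<dots> = n - 1" using that by simp
    finally show ?thesis .
  qed
  have lcL: "coeff (L i) (n - 1) = 1" if "i < n" for i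
  proof -
    have "lead_coeff (L i) = 1" unfolding L_def lead_coeff_prod by simp
    thus ?thesis using degL[OF that] by simp
  qed
  have poly_P: "poly P (x l) = x l ^ t" if "l < n" for l
  proof -
    have "poly P (x l) = (\<Sum>i<n. v i * x i ^ t * poly (L i) (x l))"
      by (simp add: P_def poly_sum)
    also have "\<dots> = (\<Sum>i\<in>{l}. v i * x i ^ t * poly (L i) (x l))"
    proof (rule sum.mono_neutral_right)
      show "\<forall>i\<in>{..<n} - {l}. v i * x i ^ t * poly (L i) (x l) = 0"
      proof
        fix i assume "i \<in> {..<n} - {l}"
        hence "l \<in> {..<n} - {i}" using that by auto
        hence "(\<Prod>j\<in>{..<n}-{i}. (x l - x j)) = 0"
          by (intro prod_zero) auto
        thus "v i * x i ^ t * poly (L i) (x l) = 0" by (simp add: pL)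
      qed
    qed (use that in auto)
    also have "\<dots> = x l ^ t" using prodnz[OF that] by (simp add: v_def pL)
    finally show ?thesis .
  qed
  have "P - monom 1 t = 0"
  proof (rule poly_zero_many_roots[OF inj])
    show "poly (P - monom 1 t) (x l) = 0" if "l < n" for l
      using poly_P[OF that] by (simp add: poly_monom)
    have "degree P \<le> n - 1" unfolding P_def
      by (rule degree_sum_le) (auto intro: order.trans[OF degree_smult_le] simp: degL)
    moreover have "degree (monom (1::'a) t) \<le> n - 1" using t by (simp add: degree_monom_eq)
    ultimately have "degree (P - monom 1 t) \<le> n - 1"
      by (meson degree_diff_le)
    thus "degree (P - monom 1 t) < n" using t by simp
  qed
  hence "coeff P (n - 1) = coeff (monom (1::'a) t) (n - 1)" by simp
  also have "\<dots> = 0" using t by simp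
  finally have "coeff P (n - 1) = 0" .
  moreover have "coeff P (n - 1) = (\<Sum>i<n. v i * x i ^ t)"
    unfolding P_def coeff_sum using lcL by (intro sum.cong) auto
  ultimately show ?thesis by (simp add: v_def)
qed


interpretation VS: vector_space "vscale :: 'a::field \<Rightarrow> (nat \<Rightarrow> 'a) \<Rightarrow> (nat \<Rightarrow> 'a)"
  by unfold_locales (auto simp: vscale_def fun_eq_iff algebra_simps)

lemma vscale_apply[simp]: "vscale c v i = c * v i" by (simp add: vscale_def)


lemma family_indep:
  fixes f :: "nat \<Rightarrow> (nat \<Rightarrow> 'a::field)"
  assumes fin: "finite I"
    and H: "\<And>u. (\<Sum>i\<in>I. vscale (u i) (f i)) = 0 \<Longrightarrow> \<forall>i\<in>I. u i = 0"
  shows "inj_on f I" "VS.independent (f ` I)"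
proof -
  show inj: "inj_on f I"
  proof (rule inj_onI, rule ccontr)
    fix i j assume ij: "i \<in> I" "j \<in> I" "f i = f j" "i \<noteq> j"
    define u where "u l = (if l = i then 1 else if l = j then -1 else (0::'a))" for l
    have "(\<Sum>l\<in>I. vscale (u l) (f l)) = vscale (u i) (f i) + (\<Sum>l\<in>I-{i}. vscale (u l) (f l))"
      using ij fin by (simp add: sum.remove)
    also have "(\<Sum>l\<in>I-{i}. vscale (u l) (f l)) = vscale (u j) (f j) + (\<Sum>l\<in>I-{i}-{j}. vscale (u l) (f l))"
      by (rule sum.remove) (use ij fin in auto)
    also have "(\<Sum>l\<in>I-{i}-{j}. vscale (u l) (f l)) = 0"
      by (rule sum.neutral) (auto simp: u_def vscale_def fun_eq_iff)
    finally have "(\<Sum>l\<in>I. vscale (u l) (f l)) = 0" using ij by (simp add: u_def vscale_def fun_eq_iff)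
    from H[OF this] ij have "u i = 0" by blast
    thus False by (simp add: u_def)
  qed
  show "VS.independent (f ` I)"
  proof
    assume "VS.dependent (f ` I)"
    then obtain c where c: "\<exists>v\<in>f ` I. c v \<noteq> 0" "(\<Sum>v\<in>f ` I. vscale (c v) v) = 0"
      using VS.dependent_finite[of "f ` I"] fin by auto
    have "(\<Sum>i\<in>I. vscale (c (f i)) (f i)) = 0" using c(2) by (simp add: sum.reindex[OF inj])
    from H[OF this] c(1) show False by auto
  qed
qed


definition G :: "nat \<Rightarrow> nat \<Rightarrow> (nat \<Rightarrow> 'a::field) \<Rightarrow> (nat \<Rightarrow> 'a) \<Rightarrow> (nat \<Rightarrow> 'a) \<Rightarrow> (nat \<Rightarrow> 'a)" where
  "G n K ww yy a = (\<lambda>i. if i < n then ww i * (\<Sum>j<K. a j * yy i ^ j) else 0)"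

lemma G_add: "G n K ww yy a + G n K ww yy b = G n K ww yy (\<lambda>j. a j + b j)"
  by (auto simp: G_def fun_eq_iff algebra_simps sum.distrib)

lemma G_scale: "vscale c (G n K ww yy a) = G n K ww yy (\<lambda>j. c * a j)"
  by (auto simp: G_def fun_eq_iff algebra_simps sum_distrib_left)

lemma G_zero: "G n K ww yy (\<lambda>_. 0) = 0"
  by (auto simp: G_def fun_eq_iff)

lemma G_subspace: "VS.subspace (range (G n K ww yy))"
  unfolding VS.subspace_def
proof (intro conjI ballI allI)
  show "0 \<in> range (G n K ww yy)" by (metis G_zero rangeI)
  show "x + y \<in> range (G n K ww yy)" if "x \<in> range (G n K ww yy)" "y \<in> range (G n K ww yy)" for x y
  proof -
    from that obtain a b where "x = G n K ww yy a" "y = G n K ww yy b" by auto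
    thus ?thesis by (simp add: G_add)
  qed
  show "vscale c x \<in> range (G n K ww yy)" if "x \<in> range (G n K ww yy)" for c x
  proof -
    from that obtain a where "x = G n K ww yy a" by auto
    thus ?thesis by (simp add: G_scale)
  qed
qed

lemma G_vecs: "G n K ww yy a \<in> vecs n" by (simp add: G_def vecs_def)

lemma G_poly:
  fixes a :: "nat \<Rightarrow> 'a::field" and K :: nat
  defines "F \<equiv> (\<Sum>j<K. monom (a j) j)"
  shows "poly F z = (\<Sum>j<K. a j * z ^ j)" "degree F < K \<or> K = 0" "j < K \<Longrightarrow> coeff F j = a j"
    "K = 0 \<Longrightarrow> F = 0"
proof -
  show "poly F z = (\<Sum>j<K. a j * z ^ j)" by (simp add: F_def poly_sum poly_monom)
  show "degree F < K \<or> K = 0"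
  proof (cases K)
    case (Suc K')
    have "degree F \<le> K'" unfolding F_def
      by (rule degree_sum_le) (auto intro: order.trans[OF degree_monom_le] simp: Suc)
    thus ?thesis using Suc by simp
  qed simp
  show "coeff F j = a j" if "j < K"
  proof -
    have "coeff F j = (\<Sum>l<K. if l = j then a l else 0)" by (simp add: F_def coeff_sum)
    also have "\<dots> = a j" using that by (simp add: sum.delta)
    finally show ?thesis .
  qed
  show "K = 0 \<Longrightarrow> F = 0" by (simp add: F_def)
qed

lemma G_coeffs:
  fixes a :: "nat \<Rightarrow> 'a::field"
  assumes "K \<le> n" "inj_on yy {..<n}" "\<And>i. i < n \<Longrightarrow> ww i \<noteq> 0"
    "\<And>i. i < n \<Longrightarrow> G n K ww yy a i = 0"
  shows "\<forall>j<K. a j = 0"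
proof -
  define F where "F = (\<Sum>j<K. monom (a j) j)"
  note FP = G_poly[where a=a and K=K, folded F_def]
  have "F = 0"
  proof (cases "K = 0")
    case True thus ?thesis using FP(4) by simp
  next
    case False
    show ?thesis
    proof (rule poly_zero_many_roots[OF assms(2)])
      show "poly F (yy l) = 0" if "l < n" for l
        using assms(4)[OF that] assms(3)[OF that] that by (simp add: G_def FP(1))
      show "degree F < n" using FP(2) False assms(1) by linarith
    qed
  qed
  thus ?thesis using FP(3) by auto
qed

lemma G_weight:
  fixes a :: "nat \<Rightarrow> 'a::field"
  assumes "K \<le> n" "inj_on yy {..<n}" "\<And>i. i < n \<Longrightarrow> ww i \<noteq> 0"
    "G n K ww yy a \<noteq> 0"
  shows "card {i. i < n \<and> G n K ww yy a i \<noteq> 0} \<ge> n + 1 - K"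
proof -
  define F where "F = (\<Sum>j<K. monom (a j) j)"
  note FP = G_poly[where a=a and K=K, folded F_def]
  define Z where "Z = {i. i < n \<and> G n K ww yy a i = 0}"
  have Zr: "Z = {i. i < n \<and> poly F (yy i) = 0}"
    using assms(3) by (auto simp: Z_def G_def FP(1))
  have Fnz: "F \<noteq> 0"
  proof
    assume "F = 0"
    hence "G n K ww yy a = 0" by (auto simp: G_def fun_eq_iff FP(1)[symmetric])
    thus False using assms(4) by simp
  qed
  hence K0: "K \<noteq> 0" using FP(4) by auto
  have "yy ` Z \<subseteq> {z. poly F z = 0}" by (auto simp: Zr)
  moreover have "inj_on yy Z" using assms(2) by (rule inj_on_subset) (auto simp: Z_def)
  moreover have "finite {z. poly F z = 0}" using Fnz poly_roots_finite by blast
  ultimately have "card Z \<le> card {z. poly F z = 0}"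
    by (metis card_image card_mono)
  also have "\<dots> \<le> degree F" by (rule card_poly_roots_bound[OF Fnz])
  finally have cZ: "card Z < K" using FP(2) K0 by linarith
  have "{i. i < n \<and> G n K ww yy a i \<noteq> 0} = {..<n} - Z" by (auto simp: Z_def)
  have "card {i. i < n \<and> G n K ww yy a i \<noteq> 0} = n - card Z"
  proof -
    have "Z \<subseteq> {..<n}" by (auto simp: Z_def)
    moreover have "finite Z" using \<open>Z \<subseteq> {..<n}\<close> finite_subset by blast
    ultimately show ?thesis using \<open>{i. i < n \<and> G n K ww yy a i \<noteq> 0} = {..<n} - Z\<close>
      by (simp add: card_Diff_subset)
  qed
  thus ?thesis using cZ by linarith
qed

lemma G_delta: "G n K ww yy (\<lambda>l. if l = j then 1 else 0) i = (if i < n \<and> j < K then ww i * yy i ^ j else 0)"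
proof -
  have "(\<Sum>l<K. (if l = j then 1 else 0) * yy i ^ l) = (\<Sum>l<K. if l = j then yy i ^ l else 0)"
    by (rule sum.cong) auto
  also have "\<dots> = (if j < K then yy i ^ j else 0)" by (simp add: sum.delta')
  finally show ?thesis by (simp add: G_def)
qed

lemma G_expand: "G n K ww yy a = (\<Sum>j<K. vscale (a j) (G n K ww yy (\<lambda>l. if l = j then 1 else 0)))"
proof (rule ext)
  fix i
  have "(\<Sum>j<K. vscale (a j) (G n K ww yy (\<lambda>l. if l = j then 1 else 0))) i
      = (\<Sum>j<K. a j * (if i < n \<and> j < K then ww i * yy i ^ j else 0))"
    by (simp add: sum_fun_apply' G_delta)
  also have "\<dots> = G n K ww yy a i"
    by (cases "i < n") (auto simp: G_def sum_distrib_left mult_ac intro: sum.cong)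
  finally show "G n K ww yy a i = (\<Sum>j<K. vscale (a j) (G n K ww yy (\<lambda>l. if l = j then 1 else 0))) i" by simp
qed


lemma sum_split_at:
  assumes "k \<le> (n::nat)"
  shows "(\<Sum>j<n. F j) = (\<Sum>j<k. F j) + (\<Sum>l<n-k. F (l + k))"
proof -
  obtain t where t: "n = k + t" using assms le_Suc_ex by blast
  have "(\<Sum>j<k + t. F j) = (\<Sum>j<k. F j) + (\<Sum>l<t. F (l + k))"
    by (induct t) (simp_all add: add.commute add_ac)
  thus ?thesis by (simp add: t)
qed

lemma G_cong: "(\<And>j. j < K \<Longrightarrow> a j = a' j) \<Longrightarrow> G n K ww yy a = G n K ww yy a'"
  by (auto simp: G_def fun_eq_iff intro!: sum.cong)

locale mpc =
  fixes r n k :: nat and x :: "nat \<Rightarrow> 'a::{finite,field}" and \<alpha> \<beta> :: 'a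
  assumes frob_add: "\<And>a b::'a. (a + b) ^ r = a ^ r + b ^ r"
    and ferm: "\<And>a::'a. (a ^ r) ^ r = a"
    and r1: "r \<ge> 1" and kn: "k \<le> n" and xinj: "inj_on x {..<n}"
    and abne: "\<alpha> \<noteq> \<beta>" and an: "\<alpha> ^ (r + 1) = -1" and bn: "\<beta> ^ (r + 1) = -1"
begin

definition "v i = inverse (\<Prod>j\<in>{..<n}-{i}. (x i - x j))"
definition "y i = x i ^ r"
definition "w i = v i ^ r"
abbreviation "g1 \<equiv> G n k (\<lambda>_. 1) x"
abbreviation "g2 \<equiv> G n (n - k) w y"
definition Cc :: "nat \<Rightarrow> (nat \<Rightarrow> 'a) set" where "Cc i = (if i = 0 then range g1 else range g2)"
definition A :: "nat \<Rightarrow> nat \<Rightarrow> 'a" where "A i j = (if j = 0 then 1 else if i = 0 then \<alpha> else \<beta>)"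
definition "Wd a b = (\<lambda>p. if p < n * 2 then A 0 (p div n) * g1 a (p mod n) + A 1 (p div n) * g2 b (p mod n) else 0)"

lemma frob_sum: "(\<Sum>i\<in>I. (f i :: 'a)) ^ r = (\<Sum>i\<in>I. f i ^ r)"
proof (induct I rule: infinite_finite_induct)
  case (infinite A) thus ?case using r1 by (cases r) auto
next
  case empty thus ?case using r1 by simp
next
  case (insert a F) thus ?case by (simp add: frob_add)
qed

lemma y_inj: "inj_on y {..<n}"
proof (rule inj_onI)
  fix i j assume "i \<in> {..<n}" "j \<in> {..<n}" "y i = y j"
  hence "x i = x j" by (metis ferm y_def)
  thus "i = j" using xinj \<open>i \<in> {..<n}\<close> \<open>j \<in> {..<n}\<close> by (auto dest: inj_onD)
qed

lemma v_nz: "i < n \<Longrightarrow> v i \<noteq> 0"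
  using xinj by (auto simp: v_def inj_on_def)

lemma w_nz: "i < n \<Longrightarrow> w i \<noteq> 0"
  using v_nz by (simp add: w_def)

lemma g2_pow: "i < n \<Longrightarrow> (g2 b i) ^ r = v i * (\<Sum>l<n-k. b l ^ r * x i ^ l)"
proof -
  assume i: "i < n"
  have "(g2 b i) ^ r = w i ^ r * (\<Sum>l<n-k. (b l * y i ^ l) ^ r)"
    using i by (simp add: G_def power_mult_distrib frob_sum)
  also have "w i ^ r = v i" by (simp add: w_def ferm)
  also have "(\<lambda>l. (b l * y i ^ l) ^ r) = (\<lambda>l. b l ^ r * x i ^ l)"
  proof
    fix l
    have "(y i ^ l) ^ r = (y i ^ r) ^ l" by (simp add: power_mult[symmetric] mult.commute)
    also have "y i ^ r = x i" by (simp add: y_def ferm)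
    finally show "(b l * y i ^ l) ^ r = b l ^ r * x i ^ l" by (simp add: power_mult_distrib)
  qed
  finally show ?thesis .
qed

lemma O1: "(\<Sum>i<n. g1 a i * (g2 b i) ^ r) = 0"
proof -
  have "(\<Sum>i<n. g1 a i * (g2 b i) ^ r) =
        (\<Sum>i<n. \<Sum>j<k. \<Sum>l<n-k. (a j * b l ^ r) * (v i * x i ^ (j + l)))"
  proof (intro sum.cong refl)
    fix i assume "i \<in> {..<n}"
    hence i: "i < n" by simp
    have "g1 a i * (g2 b i) ^ r = (\<Sum>j<k. a j * x i ^ j) * (v i * (\<Sum>l<n-k. b l ^ r * x i ^ l))"
      using i by (simp only: g2_pow) (simp add: G_def)
    also have "\<dots> = (\<Sum>j<k. \<Sum>l<n-k. (a j * b l ^ r) * (v i * x i ^ (j + l)))"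
      by (simp add: sum_distrib_left sum_distrib_right power_add mult_ac) (subst sum.swap, simp add: mult_ac)
    finally show "g1 a i * (g2 b i) ^ r = (\<Sum>j<k. \<Sum>l<n-k. (a j * b l ^ r) * (v i * x i ^ (j + l)))" .
  qed
  also have "\<dots> = (\<Sum>j<k. \<Sum>i<n. \<Sum>l<n-k. (a j * b l ^ r) * (v i * x i ^ (j + l)))"
    by (rule sum.swap)
  also have "\<dots> = (\<Sum>j<k. \<Sum>l<n-k. \<Sum>i<n. (a j * b l ^ r) * (v i * x i ^ (j + l)))"
    by (intro sum.cong refl sum.swap)
  also have "\<dots> = (\<Sum>j<k. \<Sum>l<n-k. (a j * b l ^ r) * (\<Sum>i<n. v i * x i ^ (j + l)))"
    by (simp add: sum_distrib_left)
  also have "\<dots> = 0"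
  proof (intro sum.neutral ballI)
    fix j l assume "j \<in> {..<k}" "l \<in> {..<n-k}"
    hence "j + l + 2 \<le> n" by auto
    hence "(\<Sum>i<n. v i * x i ^ (j + l)) = 0"
      unfolding v_def by (rule lagrange_power_sum[OF xinj])
    thus "(a j * b l ^ r) * (\<Sum>i<n. v i * x i ^ (j + l)) = 0" by simp
  qed
  finally show ?thesis .
qed

lemma O2: "(\<Sum>i<n. g2 b i * (g1 a i) ^ r) = 0"
proof -
  have "(\<Sum>i<n. g2 b i * (g1 a i) ^ r) = (\<Sum>i<n. (g1 a i * (g2 b i) ^ r) ^ r)"
    by (simp add: power_mult_distrib ferm mult.commute)
  also have "\<dots> = (\<Sum>i<n. g1 a i * (g2 b i) ^ r) ^ r" by (simp add: frob_sum)
  also have "\<dots> = 0" using O1 r1 by (simp add: power_0_left)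
  finally show ?thesis .
qed


lemma sum2: "(\<Sum>i<(2::nat). f i) = f 0 + f 1"
  by (simp add: numeral_2_eq_2)

lemma D_eq: "mp_code n 2 2 Cc A = {Wd a b | a b. True}"
proof (intro equalityI subsetI)
  fix u assume "u \<in> mp_code n 2 2 Cc A"
  then obtain c where c: "\<forall>i<2. c i \<in> Cc i"
    "u = (\<lambda>p. if p < n * 2 then (\<Sum>i<2. A i (p div n) * c i (p mod n)) else 0)"
    unfolding mp_code_def by blast
  from c(1) have "c 0 \<in> Cc 0" "c 1 \<in> Cc 1" by auto
  hence "c 0 \<in> range g1" "c 1 \<in> range g2" by (simp_all add: Cc_def)
  then obtain a b where ab: "c 0 = g1 a" "c 1 = g2 b" by blast
  have "u = Wd a b" unfolding c(2) sum2 Wd_def ab by (rule refl)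
  thus "u \<in> {Wd a b | a b. True}" by blast
next
  fix u assume "u \<in> {Wd a b | a b. True}"
  then obtain a b where u: "u = Wd a b" by blast
  define c where "c i = (if i = 0 then g1 a else g2 b)" for i :: nat
  have "\<forall>i<2. c i \<in> Cc i" by (auto simp: c_def Cc_def less_2_cases_iff)
  moreover have "u = (\<lambda>p. if p < n * 2 then (\<Sum>i<2. A i (p div n) * c i (p mod n)) else 0)"
    unfolding u Wd_def sum2 c_def by simp
  ultimately show "u \<in> mp_code n 2 2 Cc A" unfolding mp_code_def by blast
qed

lemma Wd_lo: "i < n \<Longrightarrow> Wd a b i = g1 a i + g2 b i"
  by (simp add: Wd_def A_def)

lemma Wd_hi: "i < n \<Longrightarrow> Wd a b (i + n) = \<alpha> * g1 a i + \<beta> * g2 b i"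
proof -
  assume i: "i < n"
  hence "(i + n) div n = 1" "(i + n) mod n = i" by auto
  thus ?thesis using i by (simp add: Wd_def A_def)
qed

lemma Wd_out: "\<not> p < 2 * n \<Longrightarrow> Wd a b p = 0"
  by (simp add: Wd_def mult.commute)

lemma sum_2n: "(\<Sum>p<2 * n. f p) = (\<Sum>i<n. f i) + (\<Sum>i<n. f (i + n))"
  using sum_split_at[of n "2 * n" f] by simp

lemma alpha_nz: "\<alpha> \<noteq> 0" using an by auto
lemma beta_nz: "\<beta> \<noteq> 0" using bn by auto

lemma pointwise_orth:
  "(c1 + c2) * (d1 + d2) ^ r + (\<alpha> * c1 + \<beta> * c2) * (\<alpha> * d1 + \<beta> * d2) ^ r
   = (1 + \<alpha> * \<beta> ^ r) * (c1 * d2 ^ r) + (1 + \<beta> * \<alpha> ^ r) * (c2 * d1 ^ r)"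
proof -
  have ea: "\<alpha> * \<alpha> ^ r = -1" using an by simp
  have eb: "\<beta> * \<beta> ^ r = -1" using bn by simp
  have "(c1 + c2) * (d1 + d2) ^ r + (\<alpha> * c1 + \<beta> * c2) * (\<alpha> * d1 + \<beta> * d2) ^ r
     = (1 + \<alpha> * \<alpha> ^ r) * (c1 * d1 ^ r) + (1 + \<alpha> * \<beta> ^ r) * (c1 * d2 ^ r)
       + (1 + \<beta> * \<alpha> ^ r) * (c2 * d1 ^ r) + (1 + \<beta> * \<beta> ^ r) * (c2 * d2 ^ r)"
    by (simp add: frob_add power_mult_distrib algebra_simps)
  thus ?thesis by (simp add: ea eb)
qed

lemma self_orth: "herm_self_orth r (2 * n) (mp_code n 2 2 Cc A)"
  unfolding herm_self_orth_def D_eq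
proof (clarify)
  fix a b a' b'
  have "herm_inner r (2 * n) (Wd a b) (Wd a' b') =
     (\<Sum>i<n. Wd a b i * Wd a' b' i ^ r) + (\<Sum>i<n. Wd a b (i + n) * Wd a' b' (i + n) ^ r)"
    unfolding herm_inner_def by (rule sum_2n)
  also have "\<dots> = (\<Sum>i<n. (g1 a i + g2 b i) * (g1 a' i + g2 b' i) ^ r
        + (\<alpha> * g1 a i + \<beta> * g2 b i) * (\<alpha> * g1 a' i + \<beta> * g2 b' i) ^ r)"
    by (simp add: Wd_lo Wd_hi sum.distrib)
  also have "\<dots> = (\<Sum>i<n. (1 + \<alpha> * \<beta> ^ r) * (g1 a i * g2 b' i ^ r) + (1 + \<beta> * \<alpha> ^ r) * (g2 b i * g1 a' i ^ r))"
    by (simp only: pointwise_orth)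
  also have "\<dots> = (1 + \<alpha> * \<beta> ^ r) * (\<Sum>i<n. g1 a i * g2 b' i ^ r) + (1 + \<beta> * \<alpha> ^ r) * (\<Sum>i<n. g2 b i * g1 a' i ^ r)"
    by (simp add: sum.distrib sum_distrib_left)
  also have "\<dots> = 0" by (simp add: O1 O2)
  finally show "herm_inner r (2 * n) (Wd a b) (Wd a' b') = 0" .
qed


lemma Wd_zeroD: "Wd a b = 0 \<Longrightarrow> i < n \<Longrightarrow> g1 a i = 0 \<and> g2 b i = 0"
proof -
  assume z: "Wd a b = 0" and i: "i < n"
  have e1: "g1 a i + g2 b i = 0" using Wd_lo[OF i, of a b] z by simp
  have e2: "\<alpha> * g1 a i + \<beta> * g2 b i = 0" using Wd_hi[OF i, of a b] z by simp
  have "g1 a i = - g2 b i" using e1 by (simp add: eq_neg_iff_add_eq_0)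
  hence "(\<beta> - \<alpha>) * g2 b i = 0" using e2 by (simp add: algebra_simps)
  hence "g2 b i = 0" using abne by simp
  thus ?thesis using e1 by simp
qed

lemma Wd_zeroI: "(\<And>i. i < n \<Longrightarrow> g1 a i = 0 \<and> g2 b i = 0) \<Longrightarrow> Wd a b = 0"
proof (rule ext)
  fix p assume H: "\<And>i. i < n \<Longrightarrow> g1 a i = 0 \<and> g2 b i = 0"
  show "Wd a b p = 0 p"
  proof (cases "p < n")
    case True thus ?thesis using H[OF True] by (simp add: Wd_lo)
  next
    case False
    show ?thesis
    proof (cases "p < 2 * n")
      case True
      hence "p - n < n" using False by simp
      moreover have "p = (p - n) + n" using False by simp
      ultimately show ?thesis using H[of "p - n"] Wd_hi[of "p - n" a b] by simp
    qed (simp add: Wd_out)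
  qed
qed

lemma weight:
  assumes "u \<in> mp_code n 2 2 Cc A" "u \<noteq> 0"
  shows "hweight (2 * n) u \<ge> min (2 * (n - k + 1)) (k + 1)"
proof -
  obtain a b where u: "u = Wd a b" using assms(1) unfolding D_eq by blast
  define supp where "supp = {p. p < 2 * n \<and> Wd a b p \<noteq> 0}"
  have fs: "finite supp" unfolding supp_def by simp
  have hw: "hweight (2 * n) u = card supp" by (simp add: hweight_def supp_def u)
  show ?thesis
  proof (cases "g2 b = 0")
    case True
    have g1nz: "g1 a \<noteq> 0"
    proof
      assume "g1 a = 0"
      hence "Wd a b = 0" using True by (intro Wd_zeroI) simp
      thus False using assms(2) u by simp
    qed
    define S where "S = {i. i < n \<and> g1 a i \<noteq> 0}"
    have cS: "card S \<ge> n + 1 - k" unfolding S_def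
      by (rule G_weight[OF kn xinj _ g1nz]) simp
    have "S \<union> (\<lambda>i. i + n) ` S \<subseteq> supp"
      using True alpha_nz by (auto simp: S_def supp_def Wd_lo Wd_hi)
    hence "card (S \<union> (\<lambda>i. i + n) ` S) \<le> card supp" using fs by (rule card_mono[rotated])
    moreover have "card (S \<union> (\<lambda>i. i + n) ` S) = card S + card S"
    proof -
      have fS: "finite S" by (simp add: S_def)
      have "card (S \<union> (\<lambda>i. i + n) ` S) = card S + card ((\<lambda>i. i + n) ` S)"
        by (rule card_Un_disjoint) (auto simp: fS S_def)
      also have "card ((\<lambda>i. i + n) ` S) = card S" by (rule card_image) (simp add: inj_on_def)
      finally show ?thesis .
    qed
    ultimately have "card supp \<ge> 2 * (n - k + 1)" using cS kn by arith
    thus ?thesis using hw by simp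
  next
    case False
    define S where "S = {i. i < n \<and> g2 b i \<noteq> 0}"
    have cS: "card S \<ge> n + 1 - (n - k)" unfolding S_def
      by (rule G_weight[OF _ y_inj w_nz False]) auto
    define h where "h i = (if Wd a b i \<noteq> 0 then i else i + n)" for i
    have "inj_on h S"
      by (auto simp: inj_on_def h_def S_def split: if_splits)
    moreover have "h ` S \<subseteq> supp"
    proof
      fix p assume "p \<in> h ` S"
      then obtain i where i: "i < n" "g2 b i \<noteq> 0" "p = h i" by (auto simp: S_def)
      show "p \<in> supp"
      proof (cases "Wd a b i \<noteq> 0")
        case True thus ?thesis using i by (simp add: h_def supp_def)
      next
        case False
        hence e1: "g1 a i = - g2 b i" using Wd_lo[OF i(1), of a b]
          by (simp add: eq_neg_iff_add_eq_0)
        have "Wd a b (i + n) = (\<beta> - \<alpha>) * g2 b i" using Wd_hi[OF i(1), of a b] e1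
          by (simp add: algebra_simps)
        hence "Wd a b (i + n) \<noteq> 0" using abne i(2) by simp
        thus ?thesis using i False by (simp add: h_def supp_def)
      qed
    qed
    ultimately have "card S \<le> card supp" using fs by (rule card_inj_on_le)
    hence "card supp \<ge> k + 1" using cS kn by arith
    thus ?thesis using hw by simp
  qed
qed


definition dl :: "nat \<Rightarrow> nat \<Rightarrow> 'a" where "dl j = (\<lambda>l. if l = j then 1 else 0)"
definition z0 :: "nat \<Rightarrow> 'a" where "z0 = (\<lambda>_. 0)"

lemma G_exp_pt: "G m K ww yy c i = (\<Sum>j<K. c j * G m K ww yy (dl j) i)"
  using fun_cong[OF G_expand[of m K ww yy c], of i] by (simp add: sum_fun_apply' dl_def)

lemma Wd_b1: "Wd (dl j) z0 p = (if p < n * 2 then A 0 (p div n) * g1 (dl j) (p mod n) else 0)"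
proof -
  have "g2 z0 = 0" using G_zero by (simp add: z0_def)
  thus ?thesis by (simp add: Wd_def)
qed

lemma Wd_b2: "Wd z0 (dl j) p = (if p < n * 2 then A 1 (p div n) * g2 (dl j) (p mod n) else 0)"
proof -
  have "g1 z0 = 0" using G_zero by (simp add: z0_def)
  thus ?thesis by (simp add: Wd_def)
qed

lemma Wd_expand:
  "Wd a b = (\<Sum>j<k. vscale (a j) (Wd (dl j) z0)) + (\<Sum>l<n-k. vscale (b l) (Wd z0 (dl l)))"
proof (rule ext)
  fix p
  have "((\<Sum>j<k. vscale (a j) (Wd (dl j) z0)) + (\<Sum>l<n-k. vscale (b l) (Wd z0 (dl l)))) p
     = (\<Sum>j<k. a j * Wd (dl j) z0 p) + (\<Sum>l<n-k. b l * Wd z0 (dl l) p)"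
    by (simp only: plus_fun_apply sum_fun_apply' vscale_apply)
  also have "\<dots> = Wd a b p"
  proof (cases "p < n * 2")
    case True
    have "(\<Sum>j<k. a j * Wd (dl j) z0 p) = (\<Sum>j<k. A 0 (p div n) * (a j * g1 (dl j) (p mod n)))"
      by (rule sum.cong[OF refl]) (simp only: Wd_b1 if_P[OF True] mult.left_commute)
    also have "\<dots> = A 0 (p div n) * (\<Sum>j<k. a j * g1 (dl j) (p mod n))"
      by (rule sum_distrib_left[symmetric])
    also have "\<dots> = A 0 (p div n) * g1 a (p mod n)" by (simp only: G_exp_pt[symmetric])
    finally have 1: "(\<Sum>j<k. a j * Wd (dl j) z0 p) = A 0 (p div n) * g1 a (p mod n)" .
    have "(\<Sum>l<n-k. b l * Wd z0 (dl l) p) = (\<Sum>l<n-k. A 1 (p div n) * (b l * g2 (dl l) (p mod n)))"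
      by (rule sum.cong[OF refl]) (simp only: Wd_b2 if_P[OF True] mult.left_commute)
    also have "\<dots> = A 1 (p div n) * (\<Sum>l<n-k. b l * g2 (dl l) (p mod n))"
      by (rule sum_distrib_left[symmetric])
    also have "\<dots> = A 1 (p div n) * g2 b (p mod n)" by (simp only: G_exp_pt[symmetric])
    finally have 2: "(\<Sum>l<n-k. b l * Wd z0 (dl l) p) = A 1 (p div n) * g2 b (p mod n)" .
    show ?thesis using True by (simp only: 1 2) (simp add: Wd_def)
  next
    case False
    thus ?thesis by (simp add: Wd_b1 Wd_b2 Wd_def)
  qed
  finally show "Wd a b p = ((\<Sum>j<k. vscale (a j) (Wd (dl j) z0)) + (\<Sum>l<n-k. vscale (b l) (Wd z0 (dl l)))) p" by simp
qed

definition fb :: "nat \<Rightarrow> nat \<Rightarrow> 'a" where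
  "fb j = (if j < k then Wd (dl j) z0 else Wd z0 (dl (j - k)))"

lemma fb_sum: "(\<Sum>j<n. vscale (u j) (fb j)) = Wd u (\<lambda>l. u (l + k))"
proof -
  have "(\<Sum>j<n. vscale (u j) (fb j)) = (\<Sum>j<k. vscale (u j) (fb j)) + (\<Sum>l<n-k. vscale (u (l + k)) (fb (l + k)))"
    by (rule sum_split_at[OF kn])
  also have "(\<Sum>j<k. vscale (u j) (fb j)) = (\<Sum>j<k. vscale (u j) (Wd (dl j) z0))"
    by (rule sum.cong) (auto simp: fb_def)
  also have "(\<Sum>l<n-k. vscale (u (l + k)) (fb (l + k))) = (\<Sum>l<n-k. vscale (u (l + k)) (Wd z0 (dl l)))"
    by (rule sum.cong) (auto simp: fb_def)
  also have "(\<Sum>j<k. vscale (u j) (Wd (dl j) z0)) + (\<Sum>l<n-k. vscale (u (l + k)) (Wd z0 (dl l))) = Wd u (\<lambda>l. u (l + k))"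
    by (rule Wd_expand[symmetric])
  finally show ?thesis .
qed

lemma fb_H: "(\<Sum>j<n. vscale (u j) (fb j)) = 0 \<Longrightarrow> \<forall>j\<in>{..<n}. u j = 0"
proof -
  assume "(\<Sum>j<n. vscale (u j) (fb j)) = 0"
  hence z: "Wd u (\<lambda>l. u (l + k)) = 0" by (simp add: fb_sum)
  have c1: "\<forall>j<k. u j = 0"
    by (rule G_coeffs[OF kn xinj]) (use Wd_zeroD[OF z] in auto)
  have c2: "\<forall>j<n-k. u (j + k) = 0"
  proof -
    have "\<forall>j<n-k. (\<lambda>l. u (l + k)) j = 0"
      by (rule G_coeffs[OF _ y_inj w_nz]) (use Wd_zeroD[OF z] in auto)
    thus ?thesis by simp
  qed
  show ?thesis
  proof
    fix j assume "j \<in> {..<n}"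
    thus "u j = 0"
    proof (cases "j < k")
      case False
      hence "j - k < n - k" "j = (j - k) + k" using \<open>j \<in> {..<n}\<close> by auto
      thus ?thesis using c2 by metis
    qed (use c1 in auto)
  qed
qed

lemma dimension: "code_dim (mp_code n 2 2 Cc A) = n"
proof -
  have fin: "finite {..<n}" by simp
  note FI = family_indep[OF fin fb_H]
  have "VS.dim {Wd a b | a b. True} = n"
  proof (rule VS.dim_unique)
    show "fb ` {..<n} \<subseteq> {Wd a b | a b. True}" by (auto simp: fb_def)
    show "{Wd a b | a b. True} \<subseteq> VS.span (fb ` {..<n})"
    proof
      fix u assume "u \<in> {Wd a b | a b. True}"
      then obtain a b where u: "u = Wd a b" by blast
      have "u = (\<Sum>j<k. vscale (a j) (fb j)) + (\<Sum>l<n-k. vscale (b l) (fb (l + k)))"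
        unfolding u by (subst Wd_expand) (simp add: fb_def)
      also have "\<dots> \<in> VS.span (fb ` {..<n})"
        using kn by (intro VS.span_add VS.span_sum VS.span_scale VS.span_base) auto
      finally show "u \<in> VS.span (fb ` {..<n})" .
    qed
    show "VS.independent (fb ` {..<n})" by (rule FI(2))
    show "card (fb ` {..<n}) = n" using card_image[OF FI(1)] by simp
  qed
  thus ?thesis by (simp add: code_dim_def D_eq)
qed

end


theorem corollary5p3:
  fixes r n k :: nat
  assumes "\<exists>p e. prime p \<and> e > 0 \<and> r = p ^ e"
    and "card (UNIV :: 'a::{finite,field} set) = r ^ 2"
    and "k \<le> n" and "n \<le> card (UNIV :: 'a set)"
  shows "\<exists>m s l (C :: nat \<Rightarrow> (nat \<Rightarrow> 'a) set) (A :: nat \<Rightarrow> nat \<Rightarrow> 'a).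
           (\<forall>i<s. linear_code m (C i)) \<and> m * l = 2 * n \<and>
           code_dim (mp_code m s l C A) = n \<and>
           herm_self_orth r (2 * n) (mp_code m s l C A) \<and>
           (\<forall>w\<in>mp_code m s l C A. w \<noteq> 0 \<longrightarrow>
              hweight (2 * n) w \<ge> min (2 * (n - k + 1)) (k + 1))"
proof -
  obtain p e where pe: "prime p" "e > 0" "r = p ^ e" using assms(1) by blast
  have card: "card (UNIV :: 'a set) = (p ^ e) ^ 2" using assms(2) pe by simp
  have ch: "CHAR('a) = p" by (rule char_eq[OF pe(1) pe(2) card])
  have frob: "(a + b) ^ r = a ^ r + b ^ r" for a b :: 'a
    by (rule freshmans_dream') (simp_all add: ch pe)
  have ferm: "(a ^ r) ^ r = a" for a :: 'a
  proof -
    have "(a ^ r) ^ r = a ^ (r ^ 2)" by (simp add: power2_eq_square power_mult)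
    also have "\<dots> = a" using ff_power_card[of a] assms(2) by simp
    finally show ?thesis .
  qed
  have r1: "r \<ge> 1" using pe(3) prime_gt_0_nat[OF pe(1)] by (simp add: Suc_leI)
  obtain T :: "'a set" where T: "card T = n" "finite T"
    using obtain_subset_with_card_n[OF assms(4)] by metis
  obtain x where "bij_betw x {0..<card T} T" using ex_bij_betw_nat_finite[OF T(2)] by blast
  hence xinj: "inj_on x {..<n}" using T(1) by (simp add: bij_betw_def atLeast0LessThan)
  obtain \<alpha> \<beta> :: 'a where ab: "\<alpha> \<noteq> \<beta>" "\<alpha> ^ (r + 1) = -1" "\<beta> ^ (r + 1) = -1"
    using norm_minus_one[OF pe(1) pe(2) pe(3) assms(2)] by blast
  interpret M: mpc r n k x \<alpha> \<beta>
    by unfold_locales (use frob ferm r1 assms(3) xinj ab in auto)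
  have lc: "\<forall>i<2. linear_code n (M.Cc i)"
    by (auto simp: linear_code_def M.Cc_def G_vecs G_subspace)
  show ?thesis
    by (intro exI[of _ n] exI[of _ 2] exI[of _ 2] exI[of _ M.Cc] exI[of _ M.A] conjI lc)
       (use M.dimension M.self_orth M.weight in auto)
qed

end
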